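(* Fix $n\in\mathbb{N}$, $n\ge 1$. For every $\Delta\in\mathcal{P}_n$, every $x\in\{0,1\}^n$ and every $i\in\mathbb{Z}_n$: $f^{(\Delta)}_{32,n}(x)_i=1$ if and only if $lab_\Delta((i+1,i))=lab_\Delta((i-1,i))=\oplus$ and $(x_{i-1},x_i,x_{i+1})=(1,0,1)$.
   Context: Cells are indexed by $\mathbb{Z}_n=\{0,\dots,n-1\}$, indices modulo $n$. Rule $32$ has local rule $r_{32}(x_1,x_2,x_3)=x_1\wedge\neg x_2\wedge x_3$ and global function $f_{32,n}(x)_i=r_{32}(x_{i-1},x_i,x_{i+1})$. An update schedule is an ordered partition $\Delta=(\Delta_1,\dots,\Delta_k)$ of $\mathbb{Z}_n$ into nonempty blocks; $\mathcal{P}_n$ is the set of them. For a block $B$ let $f^{(B)}(x)_i=f_{32,n}(x)_i$ if $i\in B$ and $x_i$ otherwise; $f^{(\Delta)}_{32,n}=f^{(\Delta_k)}\circ\cdots\circ f^{(\Delta_1)}$. For $u,v\in\mathbb{Z}_n$ with $u\in\Delta_a$, $v\in\Delta_b$, $lab_\Delta((u,v))=\oplus$ if $b\le a$ and $\ominus$ if $a<b$. *)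

theory Defs
  imports Main
begin

text \<open>Cells are 0..n-1; a configuration is a function nat => bool (only the
values at 0..n-1 matter, all indices are taken modulo n).\<close>

definition r32 :: "bool \<Rightarrow> bool \<Rightarrow> bool \<Rightarrow> bool" where
  "r32 x1 x2 x3 = (x1 \<and> \<not> x2 \<and> x3)"

definition f32 :: "nat \<Rightarrow> (nat \<Rightarrow> bool) \<Rightarrow> nat \<Rightarrow> bool" where
  "f32 n x i = r32 (x ((i + n - 1) mod n)) (x (i mod n)) (x ((i + 1) mod n))"

text \<open>An update schedule: an ordered partition of {0..<n} into nonempty blocks,
given as the list of blocks [Delta_1, ..., Delta_k].\<close>
definition ordered_partition :: "nat \<Rightarrow> nat set list \<Rightarrow> bool" where
  "ordered_partition n D \<longleftrightarrow>
     (\<forall>B\<in>set D. B \<noteq> {}) \<and> \<Union>(set D) = {..<n} \<and>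
     (\<forall>a<length D. \<forall>b<length D. a \<noteq> b \<longrightarrow> D ! a \<inter> D ! b = {})"

definition block_update :: "nat \<Rightarrow> nat set \<Rightarrow> (nat \<Rightarrow> bool) \<Rightarrow> (nat \<Rightarrow> bool)" where
  "block_update n B x = (\<lambda>i. if i \<in> B then f32 n x i else x i)"

text \<open>f^(Delta) = f^(Delta_k) o ... o f^(Delta_1): Delta_1 is applied first.\<close>
definition f32_sched :: "nat \<Rightarrow> nat set list \<Rightarrow> (nat \<Rightarrow> bool) \<Rightarrow> (nat \<Rightarrow> bool)" where
  "f32_sched n D x = foldl (\<lambda>y B. block_update n B y) x D"

definition blk :: "nat set list \<Rightarrow> nat \<Rightarrow> nat" where
  "blk D u = (THE a. a < length D \<and> u \<in> D ! a)"

datatype label = Oplus | Ominus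

definition lab :: "nat set list \<Rightarrow> nat \<times> nat \<Rightarrow> label" where
  "lab D e = (if blk D (snd e) \<le> blk D (fst e) then Oplus else Ominus)"

end

theory Submission
  imports Defs
begin

definition Yk :: "nat \<Rightarrow> nat set list \<Rightarrow> (nat \<Rightarrow> bool) \<Rightarrow> nat \<Rightarrow> (nat \<Rightarrow> bool)" where
  "Yk n D x k = foldl (\<lambda>y B. block_update n B y) x (take k D)"

lemma Yk_Suc: "k < length D \<Longrightarrow> Yk n D x (Suc k) = block_update n (D!k) (Yk n D x k)"
  by (simp add: Yk_def take_Suc_conv_app_nth)

lemma Yk_keep:
  assumes "k \<le> k'" "k' \<le> length D" "\<forall>m. k \<le> m \<and> m < k' \<longrightarrow> c \<notin> D!m"
  shows "Yk n D x k' c = Yk n D x k c"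
  using assms
proof (induction k')
  case 0 then show ?case by simp
next
  case (Suc k')
  show ?case
  proof (cases "k = Suc k'")
    case True then show ?thesis by simp
  next
    case False
    then have "k \<le> k'" using Suc by simp
    then show ?thesis using Suc by (simp add: Yk_Suc block_update_def)
  qed
qed

lemma blk_prop:
  assumes "ordered_partition n D" "c < n"
  shows "blk D c < length D \<and> c \<in> D ! blk D c"
proof -
  from assms have "c \<in> \<Union>(set D)" unfolding ordered_partition_def by auto
  then obtain B where "B \<in> set D" "c \<in> B" by blast
  then obtain a where a: "a < length D" "c \<in> D!a" by (metis in_set_conv_nth)
  have U: "\<And>b. b < length D \<and> c \<in> D!b \<Longrightarrow> b = a"
  proof -
    fix b assume "b < length D \<and> c \<in> D!b"
    then show "b = a" using assms(1) a unfolding ordered_partition_def by blast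
  qed
  have "blk D c = a" unfolding blk_def
  proof (rule the_equality)
    show "a < length D \<and> c \<in> D ! a" using a by simp
  qed (rule U)
  then show ?thesis using a by simp
qed

lemma blk_uniq:
  assumes "ordered_partition n D" "c < n" "m < length D" "c \<in> D!m"
  shows "m = blk D c"
proof (rule ccontr)
  assume "m \<noteq> blk D c"
  then have "D ! m \<inter> D ! blk D c = {}" using blk_prop[OF assms(1,2)] assms(1,3)
    unfolding ordered_partition_def by blast
  then show False using blk_prop[OF assms(1,2)] assms(4) by blast
qed

lemma Y_before:
  assumes "ordered_partition n D" "c < n" "k \<le> blk D c"
  shows "Yk n D x k c = x c"
proof -
  have "Yk n D x k c = Yk n D x 0 c"
  proof (rule Yk_keep)
    show "k \<le> length D" using assms blk_prop[OF assms(1,2)] by simp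
    show "\<forall>m. 0 \<le> m \<and> m < k \<longrightarrow> c \<notin> D ! m"
    proof (intro allI impI)
      fix m assume "0 \<le> m \<and> m < k"
      then show "c \<notin> D ! m" using assms blk_uniq[OF assms(1,2), of m] blk_prop[OF assms(1,2)] by auto
    qed
  qed simp
  then show ?thesis by (simp add: Yk_def)
qed

lemma Y_after:
  assumes "ordered_partition n D" "c < n" "blk D c < k" "k \<le> length D"
  shows "Yk n D x k c = f32 n (Yk n D x (blk D c)) c"
proof -
  have "Yk n D x k c = Yk n D x (Suc (blk D c)) c"
  proof (rule Yk_keep)
    show "\<forall>m. Suc (blk D c) \<le> m \<and> m < k \<longrightarrow> c \<notin> D ! m"
    proof (intro allI impI)
      fix m assume "Suc (blk D c) \<le> m \<and> m < k"
      then show "c \<notin> D ! m" using assms blk_uniq[OF assms(1,2), of m] by auto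
    qed
  qed (use assms in auto)
  then show ?thesis using blk_prop[OF assms(1,2)]
    by (simp add: Yk_Suc block_update_def)
qed

theorem mainTheorem12:
  fixes n :: nat and D :: "nat set list" and x :: "nat \<Rightarrow> bool" and i :: nat
  assumes "n \<ge> 1" and "ordered_partition n D" and "i < n"
  shows "f32_sched n D x i \<longleftrightarrow>
           lab D ((i + 1) mod n, i) = Oplus \<and> lab D ((i + n - 1) mod n, i) = Oplus \<and>
           x ((i + n - 1) mod n) \<and> \<not> x i \<and> x ((i + 1) mod n)"
proof -
  define l where "l = (i + n - 1) mod n"
  define r where "r = (i + 1) mod n"
  define a where "a = blk D i"
  have P: "ordered_partition n D" by fact
  have ln: "l < n" and rn: "r < n" using assms by (auto simp: l_def r_def)
  have li: "(l + 1) mod n = i"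
  proof -
    have "(l + 1) mod n = (i + n - 1 + 1) mod n" unfolding l_def by (simp add: mod_Suc_eq)
    also have "i + n - 1 + 1 = i + n" using assms by simp
    finally show ?thesis using assms by simp
  qed
  have ri: "(r + n - 1) mod n = i"
  proof -
    have "(r + (n - 1)) mod n = (i + 1 + (n - 1)) mod n" unfolding r_def by (simp add: mod_add_left_eq)
    also have "i + 1 + (n - 1) = i + n" using assms by simp
    finally show ?thesis using assms by (simp add: Nat.add_diff_assoc)
  qed
  have ia: "a < length D" using blk_prop[OF P assms(3)] a_def by simp
  have fin: "f32_sched n D x i = Yk n D x (length D) i"
    by (simp add: f32_sched_def Yk_def)
  also have "\<dots> = f32 n (Yk n D x a) i"
    using Y_after[OF P assms(3)] ia a_def by simp
  also have "\<dots> = r32 (Yk n D x a l) (x i) (Yk n D x a r)"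
    using Y_before[OF P assms(3)] assms(3) a_def by (simp add: f32_def l_def r_def)
  finally have E: "f32_sched n D x i = r32 (Yk n D x a l) (x i) (Yk n D x a r)" .
  have Yi: "\<And>k. k \<le> a \<Longrightarrow> Yk n D x k i = x i" using Y_before[OF P assms(3)] a_def by simp
  have L: "Yk n D x a l \<Longrightarrow> \<not> x i \<Longrightarrow> a \<le> blk D l"
  proof (rule ccontr)
    assume h: "Yk n D x a l" "\<not> x i" "\<not> a \<le> blk D l"
    then have "Yk n D x a l = f32 n (Yk n D x (blk D l)) l"
      using Y_after[OF P ln] ia by simp
    then show False using h Yi[of "blk D l"] li ln by (simp add: f32_def r32_def)
  qed
  have R: "Yk n D x a r \<Longrightarrow> \<not> x i \<Longrightarrow> a \<le> blk D r"
  proof (rule ccontr)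
    assume h: "Yk n D x a r" "\<not> x i" "\<not> a \<le> blk D r"
    then have "Yk n D x a r = f32 n (Yk n D x (blk D r)) r"
      using Y_after[OF P rn] ia by simp
    then show False using h Yi[of "blk D r"] ri rn by (simp add: f32_def r32_def)
  qed
  show ?thesis
    unfolding E lab_def l_def[symmetric] r_def[symmetric] a_def[symmetric] fst_conv snd_conv
    using L R Y_before[OF P ln, of a x] Y_before[OF P rn, of a x]
    by (auto simp: r32_def)
qed

end
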